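(* Let $f,g\in\mathbb{Z}[t]$ be AC polynomials of degree $d$, with $a_j,b_j$ the coefficients of $t^j$ in $f,g$ respectively. Let $r>0$ and $\lambda$ be integers and suppose $\Lambda=f+\lambda t^{d+1}A_r+t^{d+r+1}g$ is an AC polynomial, with $|a_j|<|a_{j+1}|<|\lambda|$ and $|\lambda|>|b_j|>|b_{j+1}|$ for all $j$. Then for every integer $y$ with $1\le y\le r$, $\Lambda A_y$ is an AC polynomial with the same properties as $\Lambda$; namely $$\Lambda A_y=f_y+\lambda_y t^{d+y}A_{r-y+1}+t^{d+r+1}g_y,$$ where $f_y,g_y$ are AC polynomials of degree $d+y-1$ and $\lambda_y=-\epsilon_y\,y\,\lambda$. The absolute values of the coefficients of $f_y$ are monotonically increasing, those of $g_y$ monotonically decreasing, and all are less than $|\lambda_y|$. Furthermore, the coefficients of $f_y$ depend on the parity of $r$ but not on the actual value of $r$, and the coefficients of $g_y$ are independent of $r$.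
   Context: $\epsilon_x=(-1)^x$. For an integer $w$, $A_w=(t^w+\epsilon_{w-1})/(t+1)$; for $w>0$, $A_w=\sum_{j=0}^{w-1}\epsilon_jt^{w-1-j}$. For $f\in\mathbb{Z}[t]$ write $[f]_j$ for the coefficient of $t^j$. An AC (alternating coefficient) polynomial is a nonzero $f\in\mathbb{Z}[t]$ with $[f]_j[f]_{j+1}<0$ for all $j$ with $\min\deg f\le j<\deg f$ (where $\min\deg f$ is the lowest degree of a nonzero term). *)

theory Defs
  imports "HOL-Computational_Algebra.Polynomial"
begin

definition eps :: "nat \<Rightarrow> int" where
  "eps x = (-1) ^ x"

definition A :: "nat \<Rightarrow> int poly" where
  "A w = (\<Sum>j<w. monom (eps j) (w - 1 - j))"

definition min_deg :: "int poly \<Rightarrow> nat" where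
  "min_deg f = (LEAST j. coeff f j \<noteq> 0)"

definition AC :: "int poly \<Rightarrow> bool" where
  "AC f \<longleftrightarrow> f \<noteq> 0 \<and>
     (\<forall>j. min_deg f \<le> j \<and> j < degree f \<longrightarrow> coeff f j * coeff f (j + 1) < 0)"

definition Lam :: "int poly \<Rightarrow> int poly \<Rightarrow> nat \<Rightarrow> int \<Rightarrow> nat \<Rightarrow> int poly" where
  "Lam f g d lam r = f + monom lam (d + 1) * A r + monom 1 (d + r + 1) * g"

end

theory Submission
  imports Defs
begin


lemma eps_if: "eps n = (if even n then 1 else -1)"
  by (simp add: eps_def)

lemma eps_add: "eps (a + b) = eps a * eps b"
  by (simp add: eps_def power_add)

lemma eps_Suc: "eps (Suc n) = - eps n"
  by (simp add: eps_def)

lemma eps_sq: "eps n * eps n = 1"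
  by (simp add: eps_if)

lemma abs_eps: "\<bar>eps n\<bar> = 1"
  by (simp add: eps_if)

lemma eps_cong: "even a = even b \<Longrightarrow> eps a = eps b"
  by (simp add: eps_if)

lemma coeff_A: "coeff (A w) m = (if m < w then eps (w - 1 - m) else 0)"
proof -
  have "coeff (A w) m = (\<Sum>j<w. if w - 1 - j = m then eps j else 0)"
    by (simp add: A_def coeff_sum coeff_monom)
  also have "\<dots> = (\<Sum>j<w. if j = w - 1 - m \<and> m < w then eps j else 0)"
    by (rule sum.cong) auto
  also have "\<dots> = (if m < w then eps (w - 1 - m) else 0)"
    by (cases "m < w") (auto simp: sum.delta)
  finally show ?thesis .
qed

lemma min_deg_coeff:
  assumes "p \<noteq> 0" shows "coeff p (min_deg p) \<noteq> 0"
proof -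
  have "\<exists>j. coeff p j \<noteq> 0" using assms leading_coeff_neq_0 by blast
  then show ?thesis unfolding min_deg_def by (rule LeastI_ex)
qed

lemma below_min_deg: "k < min_deg p \<Longrightarrow> coeff p k = 0"
  unfolding min_deg_def using not_less_Least by blast

lemma AC_intro:
  assumes nz: "p \<noteq> 0"
    and H: "\<forall>j<degree p. coeff p j \<noteq> 0 \<longrightarrow> coeff p j * coeff p (Suc j) < 0"
  shows "AC p"
proof -
  let ?m = "min_deg p"
  have *: "?m + k \<le> degree p \<Longrightarrow> coeff p (?m + k) \<noteq> 0" for k
  proof (induction k)
    case 0 then show ?case using min_deg_coeff[OF nz] by simp
  next
    case (Suc k)
    then have "coeff p (?m + k) \<noteq> 0" by simp
    with H Suc.prems have "coeff p (?m + k) * coeff p (Suc (?m + k)) < 0" by auto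
    then show ?case by auto
  qed
  show ?thesis unfolding AC_def
  proof (intro conjI allI impI nz)
    fix j assume j: "?m \<le> j \<and> j < degree p"
    then have "coeff p (?m + (j - ?m)) \<noteq> 0" using *[of "j - ?m"] by simp
    then have "coeff p j \<noteq> 0" using j by simp
    with j H show "coeff p j * coeff p (j + 1) < 0" by auto
  qed
qed

lemma AC_sign:
  assumes "AC p"
  shows "\<exists>s. (s = 1 \<or> s = -1) \<and> (\<forall>k. coeff p k = s * eps k * \<bar>coeff p k\<bar>)"
proof -
  let ?m = "min_deg p"
  from assms have nz: "p \<noteq> 0" and H: "\<And>j. ?m \<le> j \<Longrightarrow> j < degree p \<Longrightarrow> coeff p j * coeff p (j+1) < 0"
    unfolding AC_def by auto
  define s where "s = sgn (coeff p ?m) * eps ?m"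
  have *: "?m + k \<le> degree p \<Longrightarrow> coeff p (?m + k) \<noteq> 0 \<and> sgn (coeff p (?m + k)) = s * eps (?m + k)" for k
  proof (induction k)
    case 0 then show ?case using min_deg_coeff[OF nz] by (simp add: s_def mult.assoc eps_sq)
  next
    case (Suc k)
    then have IH: "coeff p (?m + k) \<noteq> 0 \<and> sgn (coeff p (?m + k)) = s * eps (?m + k)" by simp
    have "coeff p (?m + k) * coeff p (?m + k + 1) < 0" using H Suc.prems by simp
    then have "sgn (coeff p (?m + k)) * sgn (coeff p (?m + k + 1)) = -1"
      by (metis sgn_mult sgn_neg)
    then show ?case using IH by (auto simp: eps_Suc sgn_if split: if_splits)
  qed
  have s1: "s = 1 \<or> s = -1" using min_deg_coeff[OF nz] by (auto simp: s_def eps_if sgn_if)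
  have "coeff p k = s * eps k * \<bar>coeff p k\<bar>" for k
  proof (cases "k < ?m \<or> degree p < k")
    case True then have "coeff p k = 0" using below_min_deg coeff_eq_0 by blast
    then show ?thesis by simp
  next
    case False
    then have "coeff p (?m + (k - ?m)) \<noteq> 0 \<and> sgn (coeff p (?m + (k - ?m))) = s * eps (?m + (k - ?m))"
      using *[of "k - ?m"] False by simp
    then have "sgn (coeff p k) = s * eps k" using False by simp
    then show ?thesis by (metis sgn_mult_abs)
  qed
  with s1 show ?thesis by blast
qed

lemma AC_gen:
  assumes nz: "p \<noteq> 0" and c: "c * c = 1"
    and cf: "\<forall>n. coeff p n = c * eps n * w n" and wn: "\<forall>n. w n \<ge> 0"
    and wp: "\<forall>j<degree p. w (Suc j) > 0"
  shows "AC p"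
proof (rule AC_intro[OF nz], intro allI impI)
  fix j assume j: "j < degree p" and cj: "coeff p j \<noteq> 0"
  have "w j \<noteq> 0" using cj cf by auto
  then have wj: "w j > 0" using wn by (metis less_le)
  have "coeff p j * coeff p (Suc j) = (c * c) * (eps j * eps (Suc j)) * (w j * w (Suc j))"
    using cf by (simp add: algebra_simps)
  also have "\<dots> = - (w j * w (Suc j))" using c by (simp add: eps_Suc eps_sq)
  finally show "coeff p j * coeff p (Suc j) < 0" using wj wp j by simp
qed




locale acsetup =
  fixes f g :: "int poly" and d y :: nat and lam :: int
  assumes f_AC: "AC f" and g_AC: "AC g"
    and f_deg: "degree f = d" and g_deg: "degree g = d"
    and f_mono: "\<forall>j<d. \<bar>coeff f j\<bar> < \<bar>coeff f (j + 1)\<bar>"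
    and f_bound: "\<forall>j\<le>d. \<bar>coeff f j\<bar> < \<bar>lam\<bar>"
    and g_mono: "\<forall>j<d. \<bar>coeff g j\<bar> > \<bar>coeff g (j + 1)\<bar>"
    and g_bound: "\<forall>j\<le>d. \<bar>coeff g j\<bar> < \<bar>lam\<bar>"
    and y1: "1 \<le> y"
begin

definition HL :: "nat \<Rightarrow> nat \<Rightarrow> int" where
  "HL r i = \<bar>coeff (Lam f g d lam r) i\<bar>"

definition W :: "nat \<Rightarrow> nat \<Rightarrow> int" where
  "W r n = (\<Sum>i = n + 1 - y..n. HL r i)"

definition sig :: int where
  "sig = sgn (coeff f d) * eps d"

lemma f0: "k > d \<Longrightarrow> coeff f k = 0"
  using coeff_eq_0 f_deg by auto

lemma g0: "k > d \<Longrightarrow> coeff g k = 0"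
  using coeff_eq_0 g_deg by auto

lemma coeffL: "coeff (Lam f g d lam r) k =
  (if k \<le> d then coeff f k else if k \<le> d + r then lam * eps (d + r - k) else coeff g (k - d - r - 1))"
proof -
  have e: "coeff (Lam f g d lam r) k = coeff f k
     + (if k < d + 1 then 0 else lam * coeff (A r) (k - (d + 1)))
     + (if k < d + r + 1 then 0 else coeff g (k - (d + r + 1)))"
    by (simp add: Lam_def coeff_monom_mult)
  show ?thesis
  proof (cases "k \<le> d")
    case True then show ?thesis using e by simp
  next
    case False
    then have "coeff f k = 0" using f0 by simp
    moreover have "k \<le> d + r \<Longrightarrow> r - 1 - (k - (d + 1)) = d + r - k" using False by simp
    ultimately show ?thesis
    proof (cases "k \<le> d + r")
      case True
      then have "k - (d + 1) < r" "r - 1 - (k - (d + 1)) = d + r - k" using False by auto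
      then show ?thesis using e False True \<open>coeff f k = 0\<close> by (simp add: coeff_A)
    next
      case F2: False
      then have "\<not> k - (d + 1) < r" "k - (d + r + 1) = k - d - r - 1" using False by auto
      then show ?thesis using e False F2 \<open>coeff f k = 0\<close> by (simp add: coeff_A)
    qed
  qed
qed

lemma HL_eq: "HL r k =
  (if k \<le> d then \<bar>coeff f k\<bar> else if k \<le> d + r then \<bar>lam\<bar> else \<bar>coeff g (k - d - r - 1)\<bar>)"
  by (simp add: HL_def coeffL abs_mult abs_eps)

lemma ad: "coeff f d \<noteq> 0"
  using f_AC f_deg leading_coeff_neq_0 unfolding AC_def by blast

lemma bd: "coeff g d \<noteq> 0"
  using g_AC g_deg leading_coeff_neq_0 unfolding AC_def by blast

lemma lam_pos: "\<bar>lam\<bar> > 0"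
  using f_bound[rule_format, OF order_refl] by linarith

lemma a_lt: "i < j \<Longrightarrow> j \<le> d \<Longrightarrow> \<bar>coeff f i\<bar> < \<bar>coeff f j\<bar>"
proof -
  have "i + Suc k \<le> d \<Longrightarrow> \<bar>coeff f i\<bar> < \<bar>coeff f (i + Suc k)\<bar>" for k
  proof (induction k)
    case 0 then show ?case using f_mono by simp
  next
    case (Suc k)
    then have "\<bar>coeff f i\<bar> < \<bar>coeff f (i + Suc k)\<bar>" by simp
    also have "\<dots> < \<bar>coeff f (i + Suc k + 1)\<bar>" using f_mono Suc.prems by simp
    finally show ?case by simp
  qed
  moreover assume ij: "i < j" "j \<le> d"
  moreover have "j = i + Suc (j - i - 1)" using ij by simp
  ultimately show ?thesis by metis
qed

lemma b_gt: "i < j \<Longrightarrow> j \<le> d \<Longrightarrow> \<bar>coeff g i\<bar> > \<bar>coeff g j\<bar>"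
proof -
  have "i + Suc k \<le> d \<Longrightarrow> \<bar>coeff g i\<bar> > \<bar>coeff g (i + Suc k)\<bar>" for k
  proof (induction k)
    case 0 then show ?case using g_mono by simp
  next
    case (Suc k)
    have "\<bar>coeff g (i + Suc k + 1)\<bar> < \<bar>coeff g (i + Suc k)\<bar>" using g_mono Suc.prems by simp
    also have "\<dots> < \<bar>coeff g i\<bar>" using Suc by simp
    finally show ?case by simp
  qed
  moreover assume ij: "i < j" "j \<le> d"
  moreover have "j = i + Suc (j - i - 1)" using ij by simp
  ultimately show ?thesis by metis
qed

lemma b_pos: "j \<le> d \<Longrightarrow> \<bar>coeff g j\<bar> > 0"
  using b_gt[of j d] bd by (cases "j = d") auto

lemma HL_le: "HL r i \<le> \<bar>lam\<bar>"
proof -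
  have "\<bar>coeff g k\<bar> \<le> \<bar>lam\<bar>" for k
    using g_bound g0[of k] by (cases "k \<le> d") auto
  then show ?thesis using f_bound by (auto simp: HL_eq less_imp_le)
qed

lemma HL_nonneg: "HL r i \<ge> 0"
  by (simp add: HL_def)

lemma HL_pos: "(1 \<le> i \<and> i \<le> 2 * d + r + 1) \<or> i = d \<Longrightarrow> HL r i > 0"
proof -
  assume a: "(1 \<le> i \<and> i \<le> 2 * d + r + 1) \<or> i = d"
  consider "i \<le> d" | "d < i \<and> i \<le> d + r" | "d + r < i" by linarith
  then show ?thesis
  proof cases
    case 1
    then show ?thesis
    proof (cases "i = d")
      case True then show ?thesis using ad by (simp add: HL_eq)
    next
      case False
      then have "\<bar>coeff f 0\<bar> < \<bar>coeff f i\<bar>" using a 1 a_lt[of 0 i] by auto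
      then show ?thesis using 1 by (simp add: HL_eq)
    qed
  next
    case 2 then show ?thesis using lam_pos by (simp add: HL_eq)
  next
    case 3 then show ?thesis using a b_pos[of "i - d - r - 1"] by (simp add: HL_eq)
  qed
qed

lemma HL_zero: "i > 2 * d + r + 1 \<Longrightarrow> HL r i = 0"
  using g0 by (simp add: HL_eq)

lemma sig_sq: "sig * sig = 1"
  using ad by (simp add: sig_def eps_if sgn_if)

lemma abs_sig: "\<bar>sig\<bar> = 1"
  using ad by (simp add: sig_def abs_mult abs_eps abs_sgn_eq)

lemma sgnL:
  assumes "r > 0" "AC (Lam f g d lam r)"
  shows "coeff (Lam f g d lam r) k = sig * eps k * HL r k"
proof -
  obtain s where s: "s = 1 \<or> s = -1" and cs: "\<And>k. coeff (Lam f g d lam r) k = s * eps k * HL r k"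
    using AC_sign[OF assms(2)] unfolding HL_def by blast
  have "coeff f d = s * eps d * \<bar>coeff f d\<bar>" using cs[of d] by (simp add: coeffL HL_eq)
  then have "s = sig" using s ad by (auto simp: sig_def eps_if sgn_if split: if_splits)
  then show ?thesis using cs by simp
qed

lemma lam_sign:
  assumes "r > 0" "AC (Lam f g d lam r)"
  shows "lam = sig * eps (d + r) * \<bar>lam\<bar>"
proof -
  define e where "e = eps (d + r - (d + 1))"
  have h: "lam * e = sig * eps (d + 1) * \<bar>lam\<bar>"
    using sgnL[OF assms, of "d+1"] assms(1) by (simp add: coeffL HL_eq e_def)
  have ee: "eps (d + 1) * e = eps (d + r)"
    using assms(1) by (simp add: eps_add[symmetric] e_def)
  have "lam = lam * (e * e)" by (simp add: e_def eps_sq)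
  also have "\<dots> = (lam * e) * e" by (simp add: algebra_simps)
  also have "\<dots> = sig * (eps (d + 1) * e) * \<bar>lam\<bar>" unfolding h by (simp add: algebra_simps)
  finally show ?thesis using ee by simp
qed

lemma coeffP:
  assumes "r > 0" "AC (Lam f g d lam r)"
  shows "coeff (Lam f g d lam r * A y) n = sig * eps (n + y + 1) * W r n"
proof -
  have "coeff (Lam f g d lam r * A y) n = (\<Sum>i\<le>n. coeff (Lam f g d lam r) i * coeff (A y) (n - i))"
    by (rule coeff_mult)
  also have "\<dots> = (\<Sum>i\<le>n. if i \<in> {n + 1 - y..n} then sig * eps (n + y + 1) * HL r i else 0)"
  proof (rule sum.cong[OF refl])
    fix i assume i: "i \<in> {..n}"
    show "coeff (Lam f g d lam r) i * coeff (A y) (n - i) = (if i \<in> {n + 1 - y..n} then sig * eps (n + y + 1) * HL r i else 0)"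
    proof (cases "n - i < y")
      case True
      have "eps i * eps (y - 1 - (n - i)) = eps (n + y + 1)"
        unfolding eps_add[symmetric] proof (rule eps_cong)
        have "i \<le> n" using i by simp
        then show "even (i + (y - 1 - (n - i))) = even (n + y + 1)" using True by presburger
      qed
      then have "eps i * eps (y - 1 - (n - i)) = eps (n + y + 1)" .
      then show ?thesis using True i
        by (simp add: sgnL[OF assms] coeff_A algebra_simps)
    next
      case False then show ?thesis using i by (simp add: coeff_A)
    qed
  qed
  also have "\<dots> = (\<Sum>i\<in>{..n} \<inter> {n + 1 - y..n}. sig * eps (n + y + 1) * HL r i)"
    by (rule sum.inter_restrict[symmetric]) simp
  also have "{..n} \<inter> {n + 1 - y..n} = {n + 1 - y..n}" by auto
  finally show ?thesis by (simp add: W_def sum_distrib_left)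
qed

end



context acsetup
begin

lemma W_nonneg: "W r n \<ge> 0"
  unfolding W_def by (rule sum_nonneg) (simp add: HL_nonneg)

lemma W_Suc: "W r (Suc n) = W r n + HL r (Suc n) - (if y \<le> Suc n then HL r (Suc n - y) else 0)"
proof (cases "y \<le> Suc n")
  case False
  then have "Suc n + 1 - y = 0" "n + 1 - y = 0" by auto
  then show ?thesis using False by (simp add: W_def)
next
  case True
  define a where "a = Suc n - y"
  have a1: "Suc n + 1 - y = Suc a" "n + 1 - y = a" using True by (auto simp: a_def)
  have le: "a \<le> Suc n" by (simp add: a_def)
  have F1: "sum (HL r) {a..Suc n} = HL r a + sum (HL r) {Suc a..Suc n}"
    using le by (rule sum.atLeast_Suc_atMost)
  have F2: "sum (HL r) {a..Suc n} = sum (HL r) {a..n} + HL r (Suc n)"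
    using le by (simp del: sum.cl_ivl_Suc add: atLeastAtMostSuc_conv sum.insert)
  have "W r (Suc n) = sum (HL r) {Suc a..Suc n}" unfolding W_def a1 ..
  moreover have "W r n = sum (HL r) {a..n}" unfolding W_def a1 ..
  ultimately show ?thesis using F1 F2 True by (simp add: a_def[symmetric])
qed

lemma card_win: "card {n + 1 - y..n} \<le> y"
  by simp

lemma W_lt:
  assumes "i0 \<in> {n + 1 - y..n}" "HL r i0 < \<bar>lam\<bar>"
  shows "W r n < int y * \<bar>lam\<bar>"
proof -
  have "W r n < (\<Sum>i = n + 1 - y..n. \<bar>lam\<bar>)"
    unfolding W_def by (rule sum_strict_mono_ex1) (use assms HL_le in auto)
  also have "\<dots> = int (card {n + 1 - y..n}) * \<bar>lam\<bar>" by simp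
  also have "\<dots> \<le> int y * \<bar>lam\<bar>"
    by (rule mult_right_mono) (use card_win in auto)
  finally show ?thesis .
qed

lemma W_pos_at:
  assumes "i0 \<in> {n + 1 - y..n}" "HL r i0 > 0"
  shows "W r n > 0"
proof -
  have "HL r i0 \<le> W r n" unfolding W_def
    by (rule member_le_sum) (use assms HL_nonneg in auto)
  then show ?thesis using assms by simp
qed

lemma W_zero: "n + 1 - y > 2 * d + r + 1 \<Longrightarrow> W r n = 0"
  unfolding W_def by (rule sum.neutral) (auto intro!: HL_zero)

lemma W_pos: "1 \<le> n \<Longrightarrow> n \<le> 2 * d + r + y \<Longrightarrow> W r n > 0"
  by (rule W_pos_at[of "min n (2 * d + r + 1)"]) (use y1 in \<open>auto intro!: HL_pos\<close>)

lemma W_full: "d + y \<le> n \<Longrightarrow> n \<le> d + r \<Longrightarrow> W r n = int y * \<bar>lam\<bar>"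
proof -
  assume a: "d + y \<le> n" "n \<le> d + r"
  have "W r n = (\<Sum>i = n + 1 - y..n. \<bar>lam\<bar>)"
    unfolding W_def by (rule sum.cong) (use a y1 in \<open>auto simp: HL_eq\<close>)
  also have "\<dots> = int y * \<bar>lam\<bar>" using a y1 by simp
  finally show ?thesis .
qed

definition Wg :: "nat \<Rightarrow> int" where
  "Wg m = (\<Sum>i = d + 2 + m..d + 1 + m + y. if i \<le> d + y then \<bar>lam\<bar> else \<bar>coeff g (i - y - d - 1)\<bar>)"

lemma W_high: "y \<le> r \<Longrightarrow> W r (d + r + 1 + m) = Wg m"
proof -
  assume yr: "y \<le> r"
  have "W r (d + r + 1 + m) = (\<Sum>i = (d + 2 + m) + (r - y)..(d + 1 + m + y) + (r - y). HL r i)"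
    unfolding W_def by (rule sum.cong) (use yr in auto)
  also have "\<dots> = (\<Sum>i = d + 2 + m..d + 1 + m + y. HL r (i + (r - y)))"
    by (rule sum.shift_bounds_cl_nat_ivl)
  also have "\<dots> = Wg m"
    unfolding Wg_def
  proof (rule sum.cong[OF refl])
    fix i assume i: "i \<in> {d + 2 + m..d + 1 + m + y}"
    show "HL r (i + (r - y)) = (if i \<le> d + y then \<bar>lam\<bar> else \<bar>coeff g (i - y - d - 1)\<bar>)"
    proof (cases "i \<le> d + y")
      case True
      then have "\<not> i + (r - y) \<le> d" "i + (r - y) \<le> d + r" using i yr by auto
      then show ?thesis using True by (simp only: HL_eq if_False if_True)
    next
      case False
      then have "i + (r - y) - d - r - 1 = i - y - d - 1" "\<not> i + (r - y) \<le> d" "\<not> i + (r - y) \<le> d + r"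
        using yr i by auto
      then show ?thesis using False by (simp only: HL_eq if_False if_True)
    qed
  qed
  finally show ?thesis .
qed

lemma W_low: "y \<le> r \<Longrightarrow> y \<le> r' \<Longrightarrow> n < d + y \<Longrightarrow> W r n = W r' n"
  unfolding W_def by (rule sum.cong) (auto simp: HL_eq)

end



context acsetup
begin

lemma eps_shift: "eps (n + k) = eps n * eps k"
  by (rule eps_add)

lemma fy_step:
  assumes "Suc j \<le> d + y - 1" "y \<le> r"
  shows "(if y \<le> Suc j then HL r (Suc j - y) else 0) < HL r (Suc j)"
proof (cases "Suc j \<le> d")
  case True
  show ?thesis
  proof (cases "y \<le> Suc j")
    case True2: True
    have "\<bar>coeff f (Suc j - y)\<bar> < \<bar>coeff f (Suc j)\<bar>" using a_lt[of "Suc j - y" "Suc j"] True True2 y1 by simp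
    moreover have "Suc j - y \<le> d" using True by simp
    ultimately show ?thesis using True True2 by (simp only: HL_eq if_True)
  next
    case False
    then show ?thesis using HL_pos[of "Suc j" r] True by simp
  qed
next
  case False
  have "Suc j \<le> d + r" using assms by simp
  then have h: "HL r (Suc j) = \<bar>lam\<bar>" using False by (simp only: HL_eq if_True if_False)
  show ?thesis
  proof (cases "y \<le> Suc j")
    case True
    have "Suc j - y \<le> d" using assms by simp
    then have "HL r (Suc j - y) < \<bar>lam\<bar>" using f_bound by (simp add: HL_eq)
    then show ?thesis using h True by simp
  next
    case False then show ?thesis using h lam_pos by simp
  qed
qed

lemma gy_step:
  assumes "m < d + y - 1" "y \<le> r"
  shows "HL r (Suc (m + (d + r + 1))) < HL r (Suc (m + (d + r + 1)) - y)"
proof -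
  have h1: "HL r (Suc (m + (d + r + 1))) = (if m + 1 \<le> d then \<bar>coeff g (m + 1)\<bar> else 0)"
    using g0[of "m+1"] by (simp add: HL_eq)
  have b1: "(if m + 1 \<le> d then \<bar>coeff g (m + 1)\<bar> else 0) < \<bar>lam\<bar>"
    using g_bound lam_pos by auto
  show ?thesis
  proof (cases "m + 2 \<le> y")
    case True
    have "\<not> Suc (m + (d + r + 1)) - y \<le> d" "Suc (m + (d + r + 1)) - y \<le> d + r" using True assms by auto
    then have "HL r (Suc (m + (d + r + 1)) - y) = \<bar>lam\<bar>" by (simp only: HL_eq if_True if_False)
    then show ?thesis using h1 b1 by simp
  next
    case False
    have "HL r (Suc (m + (d + r + 1)) - y) = \<bar>coeff g (m + 1 - y)\<bar>"
    proof -
      have "\<not> Suc (m + (d + r + 1)) - y \<le> d + r" "Suc (m + (d + r + 1)) - y - d - r - 1 = m + 1 - y"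
        using False assms by auto
      then show ?thesis by (simp add: HL_eq)
    qed
    moreover have "m + 1 - y < d" using assms False by simp
    moreover have "(if m + 1 \<le> d then \<bar>coeff g (m + 1)\<bar> else 0) < \<bar>coeff g (m + 1 - y)\<bar>"
      using b_gt[of "m + 1 - y" "m + 1"] b_pos[of "m + 1 - y"] assms False y1 by auto
    ultimately show ?thesis using h1 by simp
  qed
qed

lemma decomp_coeff:
  "coeff (fy + monom c (d + y) * A (r'' - y + 1) + monom 1 (d + r'' + 1) * gy) k =
   coeff fy k + (if k < d + y then 0 else c * coeff (A (r'' - y + 1)) (k - (d + y)))
     + (if k < d + r'' + 1 then 0 else coeff gy (k - (d + r'' + 1)))"
  by (simp add: coeff_monom_mult)

end



context acsetup
begin

lemma main:
  assumes r_pos: "r > 0" and L_AC: "AC (Lam f g d lam r)" and yr: "y \<le> r"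
  shows "AC (Lam f g d lam r * A y) \<and>
    (\<exists>fy gy.
       Lam f g d lam r * A y
         = fy + monom (- eps y * int y * lam) (d + y) * A (r - y + 1)
              + monom 1 (d + r + 1) * gy
     \<and> AC fy \<and> AC gy \<and> degree fy = d + y - 1 \<and> degree gy = d + y - 1
     \<and> (\<forall>j < d + y - 1. \<bar>coeff fy j\<bar> < \<bar>coeff fy (j + 1)\<bar>)
     \<and> (\<forall>j < d + y - 1. \<bar>coeff gy j\<bar> > \<bar>coeff gy (j + 1)\<bar>)
     \<and> (\<forall>j \<le> d + y - 1. \<bar>coeff fy j\<bar> < \<bar>- eps y * int y * lam\<bar>)
     \<and> (\<forall>j \<le> d + y - 1. \<bar>coeff gy j\<bar> < \<bar>- eps y * int y * lam\<bar>)
     \<and> (\<forall>r' fy' gy'. r' > 0 \<and> y \<le> r' \<and> AC (Lam f g d lam r')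
          \<and> Lam f g d lam r' * A y
              = fy' + monom (- eps y * int y * lam) (d + y) * A (r' - y + 1)
                   + monom 1 (d + r' + 1) * gy'
          \<and> degree fy' = d + y - 1 \<and> degree gy' = d + y - 1
          \<longrightarrow> gy' = gy \<and> (even r' = even r \<longrightarrow> fy' = fy)))"
proof -
  define P where "P = Lam f g d lam r * A y"
  define fy where "fy = poly_cutoff (d + y) P"
  define gy where "gy = poly_shift (d + r + 1) P"
  define c where "c = - eps y * int y * lam"
  have cP: "coeff P n = sig * eps (n + y + 1) * W r n" for n
    unfolding P_def by (rule coeffP[OF r_pos L_AC])
  have aP: "\<bar>coeff P n\<bar> = W r n" for n
    by (simp add: cP abs_mult abs_eps abs_sig W_nonneg)
  have cfy: "coeff fy n = (if n < d + y then coeff P n else 0)" for n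
    by (simp add: fy_def coeff_poly_cutoff)
  have cgy: "coeff gy n = coeff P (n + (d + r + 1))" for n
    by (simp add: gy_def coeff_poly_shift)
  have ac: "\<bar>c\<bar> = int y * \<bar>lam\<bar>" by (simp add: c_def abs_mult abs_eps)
  have decomp: "P = fy + monom c (d + y) * A (r - y + 1) + monom 1 (d + r + 1) * gy"
  proof (rule poly_eqI)
    fix k
    show "coeff P k = coeff (fy + monom c (d + y) * A (r - y + 1) + monom 1 (d + r + 1) * gy) k"
    proof (cases "k < d + y")
      case True then show ?thesis unfolding decomp_coeff using yr by (simp add: cfy)
    next
      case False
      show ?thesis
      proof (cases "k \<le> d + r")
        case True
        have W: "W r k = int y * \<bar>lam\<bar>" using False True by (intro W_full) auto
        have kA: "k - (d + y) < r - y + 1" using True yr by simp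
        have par: "eps (k + y + 1) = - eps y * eps (d + r) * eps (r - y + 1 - 1 - (k - (d + y)))"
        proof -
          have "- eps y * eps (d + r) * eps (r - y + 1 - 1 - (k - (d + y)))
               = eps (Suc (y + (d + r) + (r - y + 1 - 1 - (k - (d + y)))))"
            by (simp add: eps_add eps_Suc)
          also have "\<dots> = eps (k + y + 1)"
            by (rule eps_cong) (use True False yr in presburger)
          finally show ?thesis by simp
        qed
        have "coeff P k = sig * eps (k + y + 1) * (int y * \<bar>lam\<bar>)" using cP W by simp
        also have "\<dots> = c * eps (r - y + 1 - 1 - (k - (d + y)))"
        proof -
          have cc: "c = - eps y * int y * (sig * eps (d + r) * \<bar>lam\<bar>)"
            unfolding c_def by (rule arg_cong[OF lam_sign[OF r_pos L_AC]])
          show ?thesis unfolding par cc by (simp add: algebra_simps)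
        qed
        finally show ?thesis using False True kA unfolding decomp_coeff by (simp add: cfy coeff_A)
      next
        case F2: False
        have "\<not> k - (d + y) < r - y + 1" using F2 yr by simp
        then show ?thesis using False F2 unfolding decomp_coeff by (simp add: cfy cgy coeff_A)
      qed
    qed
  qed
  have WP1: "W r (d + y - 1) > 0"
    by (rule W_pos_at[of d]) (use y1 in \<open>auto intro: HL_pos\<close>)
  have dfy: "degree fy = d + y - 1"
  proof (rule antisym)
    show "degree fy \<le> d + y - 1" by (rule degree_le) (use y1 in \<open>auto simp: cfy\<close>)
    have lt: "d + y - 1 < d + y" using y1 by simp
    then have "\<bar>coeff fy (d + y - 1)\<bar> = W r (d + y - 1)" by (simp only: cfy aP lt if_True)
    then have "coeff fy (d + y - 1) \<noteq> 0" using WP1 by auto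
    then show "d + y - 1 \<le> degree fy" by (rule le_degree)
  qed
  have dgy: "degree gy = d + y - 1"
  proof (rule antisym)
    show "degree gy \<le> d + y - 1"
      by (rule degree_le) (auto simp: cgy cP intro!: W_zero)
    have "W r (d + y - 1 + (d + r + 1)) > 0" by (rule W_pos) (use y1 in auto)
    moreover have "\<bar>coeff gy (d + y - 1)\<bar> = W r (d + y - 1 + (d + r + 1))" by (simp only: cgy aP)
    ultimately have "coeff gy (d + y - 1) \<noteq> 0" by auto
    then show "d + y - 1 \<le> degree gy" by (rule le_degree)
  qed
  have eps3: "eps (n + y + 1) = eps n * eps (y + 1)" for n
    by (simp add: eps_add[symmetric] add.assoc)
  have ss: "(sig * eps (y + 1)) * (sig * eps (y + 1)) = 1"
    using sig_sq eps_sq[of "y+1"] by (simp add: algebra_simps)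
  have degP: "degree P \<le> 2 * d + r + y"
    by (rule degree_le) (auto simp: cP intro!: W_zero)
  have ACP: "AC P"
  proof (rule AC_gen[where c = "sig * eps (y + 1)" and w = "W r"])
    have "W r 1 > 0" by (rule W_pos) (use y1 in auto)
    then have "coeff P 1 \<noteq> 0" using aP[of 1] by auto
    then show "P \<noteq> 0" by auto
    show "(sig * eps (y + 1)) * (sig * eps (y + 1)) = 1" by (rule ss)
    show "\<forall>n. coeff P n = sig * eps (y + 1) * eps n * W r n" unfolding cP eps3 by (simp add: algebra_simps)
    show "\<forall>n. 0 \<le> W r n" by (simp add: W_nonneg)
    show "\<forall>j<degree P. 0 < W r (Suc j)" using degP by (auto intro!: W_pos)
  qed
  have ACfy: "AC fy"
  proof (rule AC_gen[where c = "sig * eps (y + 1)" and w = "\<lambda>n. if n < d + y then W r n else 0"])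
    have lt: "d + y - 1 < d + y" using y1 by simp
    then have "\<bar>coeff fy (d + y - 1)\<bar> = W r (d + y - 1)" by (simp only: cfy aP lt if_True)
    then have "coeff fy (d + y - 1) \<noteq> 0" using WP1 by auto
    then show "fy \<noteq> 0" by auto
    show "(sig * eps (y + 1)) * (sig * eps (y + 1)) = 1" by (rule ss)
    show "\<forall>n. coeff fy n = sig * eps (y + 1) * eps n * (if n < d + y then W r n else 0)"
      unfolding cfy cP eps3 by (simp add: algebra_simps)
    show "\<forall>n. 0 \<le> (if n < d + y then W r n else 0)" by (simp add: W_nonneg)
    show "\<forall>j<degree fy. 0 < (if Suc j < d + y then W r (Suc j) else 0)"
      using dfy by (auto intro!: W_pos)
  qed
  have eps4: "eps (n + (d + r + 1) + y + 1) = eps n * eps (d + r + y + 2)" for n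
    by (simp add: eps_add[symmetric] algebra_simps)
  have ss2: "(sig * eps (d + r + y + 2)) * (sig * eps (d + r + y + 2)) = 1"
    using sig_sq eps_sq[of "d + r + y + 2"] by (simp add: algebra_simps)
  have ACgy: "AC gy"
  proof (rule AC_gen[where c = "sig * eps (d + r + y + 2)" and w = "\<lambda>n. W r (n + (d + r + 1))"])
    have "W r (d + y - 1 + (d + r + 1)) > 0" by (rule W_pos) (use y1 in auto)
    moreover have "\<bar>coeff gy (d + y - 1)\<bar> = W r (d + y - 1 + (d + r + 1))" by (simp only: cgy aP)
    ultimately have "coeff gy (d + y - 1) \<noteq> 0" by auto
    then show "gy \<noteq> 0" by auto
    show "(sig * eps (d + r + y + 2)) * (sig * eps (d + r + y + 2)) = 1" by (rule ss2)
    show "\<forall>n. coeff gy n = sig * eps (d + r + y + 2) * eps n * W r (n + (d + r + 1))"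
      unfolding cgy cP eps4 by (simp add: algebra_simps)
    show "\<forall>n. 0 \<le> W r (n + (d + r + 1))" by (simp add: W_nonneg)
    show "\<forall>j<degree gy. 0 < W r (Suc j + (d + r + 1))"
      using dgy by (auto intro!: W_pos)
  qed
  have mfy: "\<forall>j < d + y - 1. \<bar>coeff fy j\<bar> < \<bar>coeff fy (j + 1)\<bar>"
  proof (intro allI impI)
    fix j assume j: "j < d + y - 1"
    have "W r j < W r (Suc j)" using W_Suc[of r j] fy_step[of j r] j yr by simp
    moreover have "j < d + y" "j + 1 < d + y" using j by auto
    ultimately show "\<bar>coeff fy j\<bar> < \<bar>coeff fy (j + 1)\<bar>" by (simp only: cfy aP if_True Suc_eq_plus1)
  qed
  have mgy: "\<forall>j < d + y - 1. \<bar>coeff gy j\<bar> > \<bar>coeff gy (j + 1)\<bar>"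
  proof (intro allI impI)
    fix j assume j: "j < d + y - 1"
    have yl: "y \<le> Suc (j + (d + r + 1))" using yr by simp
    have "W r (Suc (j + (d + r + 1))) < W r (j + (d + r + 1))"
      using W_Suc[of r "j + (d + r + 1)"] gy_step[of j r] j yr yl by simp
    then show "\<bar>coeff gy j\<bar> > \<bar>coeff gy (j + 1)\<bar>" by (simp add: cgy aP)
  qed
  have bfy: "\<forall>j \<le> d + y - 1. \<bar>coeff fy j\<bar> < \<bar>c\<bar>"
  proof (intro allI impI)
    fix j assume j: "j \<le> d + y - 1"
    have "W r j < int y * \<bar>lam\<bar>"
      by (rule W_lt[of "min j d"]) (use j y1 f_bound in \<open>auto simp: HL_eq\<close>)
    moreover have "j < d + y" using j y1 by auto
    ultimately show "\<bar>coeff fy j\<bar> < \<bar>c\<bar>" using ac by (simp add: cfy aP)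
  qed
  have bgy: "\<forall>j \<le> d + y - 1. \<bar>coeff gy j\<bar> < \<bar>c\<bar>"
  proof (intro allI impI)
    fix j assume j: "j \<le> d + y - 1"
    have h: "HL r (d + r + 1 + min j d) < \<bar>lam\<bar>"
    proof -
      have "\<not> d + r + 1 + min j d \<le> d + r" "d + r + 1 + min j d - d - r - 1 = min j d" by auto
      then have "HL r (d + r + 1 + min j d) = \<bar>coeff g (min j d)\<bar>" by (simp only: HL_eq if_False) simp
      then show ?thesis using g_bound by simp
    qed
    have "W r (j + (d + r + 1)) < int y * \<bar>lam\<bar>"
      by (rule W_lt[of "d + r + 1 + min j d"]) (use j y1 h in auto)
    then show "\<bar>coeff gy j\<bar> < \<bar>c\<bar>" using ac by (simp add: cgy aP)
  qed
  have uniq: "\<forall>r' fy' gy'. r' > 0 \<and> y \<le> r' \<and> AC (Lam f g d lam r')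
          \<and> Lam f g d lam r' * A y = fy' + monom c (d + y) * A (r' - y + 1) + monom 1 (d + r' + 1) * gy'
          \<and> degree fy' = d + y - 1 \<and> degree gy' = d + y - 1
          \<longrightarrow> gy' = gy \<and> (even r' = even r \<longrightarrow> fy' = fy)"
  proof (intro allI impI)
    fix r' fy' gy'
    assume H: "r' > 0 \<and> y \<le> r' \<and> AC (Lam f g d lam r')
          \<and> Lam f g d lam r' * A y = fy' + monom c (d + y) * A (r' - y + 1) + monom 1 (d + r' + 1) * gy'
          \<and> degree fy' = d + y - 1 \<and> degree gy' = d + y - 1"
    then have r'0: "r' > 0" and yr': "y \<le> r'" and AC': "AC (Lam f g d lam r')"
      and E: "Lam f g d lam r' * A y = fy' + monom c (d + y) * A (r' - y + 1) + monom 1 (d + r' + 1) * gy'"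
      and df': "degree fy' = d + y - 1" and dg': "degree gy' = d + y - 1" by auto
    have cP': "coeff (Lam f g d lam r' * A y) n = sig * eps (n + y + 1) * W r' n" for n
      by (rule coeffP[OF r'0 AC'])
    have f'0: "n \<ge> d + y \<Longrightarrow> coeff fy' n = 0" for n using df' y1 by (intro coeff_eq_0) simp
    have "eps (d + r) = eps (d + r')"
    proof -
      have "sig * eps (d + r) * \<bar>lam\<bar> = sig * eps (d + r') * \<bar>lam\<bar>"
        using lam_sign[OF r_pos L_AC] lam_sign[OF r'0 AC'] by simp
      then have "sig * eps (d + r) = sig * eps (d + r')" using lam_pos by simp
      then show ?thesis using abs_sig by auto
    qed
    then have epr: "eps r = eps r'" by (simp add: eps_add) (metis mult_cancel_left eps_sq zero_neq_one mult_zero_right)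
    have "coeff gy' m = coeff gy m" for m
    proof -
      have "coeff (Lam f g d lam r' * A y) (m + (d + r' + 1)) = coeff gy' m"
        using f'0[of "m + (d + r' + 1)"] yr' unfolding E decomp_coeff by (simp add: coeff_A)
      moreover have "coeff (Lam f g d lam r' * A y) (m + (d + r' + 1)) = sig * eps (m + (d + r' + 1) + y + 1) * Wg m"
        using cP' W_high[OF yr', of m] by (simp add: add.commute add.left_commute)
      moreover have "coeff gy m = sig * eps (m + (d + r + 1) + y + 1) * Wg m"
        using cgy cP W_high[OF yr, of m] by (simp add: add.commute add.left_commute)
      moreover have "eps (m + (d + r' + 1) + y + 1) = eps (m + d + y + 2) * eps r'"
        unfolding eps_add[symmetric] by (simp add: algebra_simps)
      moreover have "eps (m + (d + r + 1) + y + 1) = eps (m + d + y + 2) * eps r"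
        unfolding eps_add[symmetric] by (simp add: algebra_simps)
      ultimately show ?thesis using epr by simp
    qed
    then have "gy' = gy" by (simp add: poly_eq_iff)
    moreover have "fy' = fy"
    proof (rule poly_eqI)
      fix k show "coeff fy' k = coeff fy k"
      proof (cases "k < d + y")
        case True
        have "coeff (Lam f g d lam r' * A y) k = coeff fy' k"
          using True yr' unfolding E decomp_coeff by simp
        then show ?thesis using True cP' cfy cP W_low[OF yr yr' True] by simp
      next
        case False then show ?thesis using f'0 cfy by simp
      qed
    qed
    ultimately show "gy' = gy \<and> (even r' = even r \<longrightarrow> fy' = fy)" by simp
  qed
  show ?thesis
    unfolding P_def[symmetric] c_def[symmetric]
    using decomp ACP ACfy ACgy dfy dgy mfy mgy bfy bgy uniq by blast
qed

end

theorem proposition1p1: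
  fixes f g :: "int poly" and d r y :: nat and lam :: int
  assumes f_AC: "AC f" and g_AC: "AC g"
    and f_deg: "degree f = d" and g_deg: "degree g = d"
    and r_pos: "r > 0"
    and L_AC: "AC (Lam f g d lam r)"
    and f_mono: "\<forall>j<d. \<bar>coeff f j\<bar> < \<bar>coeff f (j + 1)\<bar>"
    and f_bound: "\<forall>j\<le>d. \<bar>coeff f j\<bar> < \<bar>lam\<bar>"
    and g_mono: "\<forall>j<d. \<bar>coeff g j\<bar> > \<bar>coeff g (j + 1)\<bar>"
    and g_bound: "\<forall>j\<le>d. \<bar>coeff g j\<bar> < \<bar>lam\<bar>"
    and y: "1 \<le> y" "y \<le> r"
  shows "AC (Lam f g d lam r * A y) \<and>
    (\<exists>fy gy.
       Lam f g d lam r * A y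
         = fy + monom (- eps y * int y * lam) (d + y) * A (r - y + 1)
              + monom 1 (d + r + 1) * gy
     \<and> AC fy \<and> AC gy \<and> degree fy = d + y - 1 \<and> degree gy = d + y - 1
     \<and> (\<forall>j < d + y - 1. \<bar>coeff fy j\<bar> < \<bar>coeff fy (j + 1)\<bar>)
     \<and> (\<forall>j < d + y - 1. \<bar>coeff gy j\<bar> > \<bar>coeff gy (j + 1)\<bar>)
     \<and> (\<forall>j \<le> d + y - 1. \<bar>coeff fy j\<bar> < \<bar>- eps y * int y * lam\<bar>)
     \<and> (\<forall>j \<le> d + y - 1. \<bar>coeff gy j\<bar> < \<bar>- eps y * int y * lam\<bar>)
     \<and> (\<forall>r' fy' gy'. r' > 0 \<and> y \<le> r' \<and> AC (Lam f g d lam r')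
          \<and> Lam f g d lam r' * A y
              = fy' + monom (- eps y * int y * lam) (d + y) * A (r' - y + 1)
                   + monom 1 (d + r' + 1) * gy'
          \<and> degree fy' = d + y - 1 \<and> degree gy' = d + y - 1
          \<longrightarrow> gy' = gy \<and> (even r' = even r \<longrightarrow> fy' = fy)))"
proof -
  interpret acsetup f g d y lam
    by unfold_locales (use f_AC g_AC f_deg g_deg f_mono f_bound g_mono g_bound y in auto)
  show ?thesis by (rule main[OF r_pos L_AC y(2)])
qed

end
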